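(* Let $n\in\mathbb{N}$, $\sigma\in[1/n,1]$, $\varepsilon\in(0,1)$, and let $q$ be an $n$-arm bandit with expected utilities vector $u$. If the honest prover and the verifier of Protocol 1 interact, each with oracle access to $\mathcal{O}_q$, then with probability at least $2/3$ the verifier does not reject and outputs a strategy $\pi_V$ that is an $\varepsilon$-optimal $\sigma$-smooth strategy for $u$.
   Context: An $n$-arm bandit is a vector $q=(q_1,\dots,q_n)$ of distributions on $[0,1]$; its oracle $\mathcal{O}_q$ returns, on query ("pull") $i$, an independent sample from $q_i$; $u_i=\mathbb{E}_{x\sim q_i}[x]$. A strategy $\pi$ is a distribution on $[n]$ with $\pi\cdot u=\sum_i\pi_iu_i$; it is $\sigma$-smooth if $\pi_i\le\sigma$ for all $i$; it is an $\varepsilon$-optimal $\sigma$-smooth strategy for $u$ if it is $\sigma$-smooth and $\pi'\cdot u-\pi\cdot u\le\varepsilon$ for all $\sigma$-smooth $\pi'$. Protocol 1 (parameters $n,\sigma,\varepsilon$): Let $L=\log_4(1/\varepsilon)+2$ and $B=\{0,1,\dots,\lceil\log_4(1/\varepsilon)\rceil\}$. For $b\in B$ let $\varepsilon_b=\varepsilon\cdot4^b$, $a_b=\lceil 4^b\cdot 4n\sigma\cdot L\cdot\ln 6\rceil$ and $m_b=\lceil 128\ln(12\,L\,a_b)/\varepsilon_b^2\rceil$. The honest prover pulls each arm $i\in[n]$ exactly $k_P=\lceil128\ln(12n/\varepsilon)/\varepsilon^2\rceil$ times and sends the vector $\tilde u$ of empirical averages. The verifier receives $\tilde u\in[0,1]^n$;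 for each $b\in B$ and each $t\in[a_b]$, it samples $i_{b,t}$ uniformly from $[n]$ (independently), pulls arm $i_{b,t}$ exactly $m_b$ times, lets $\hat u_{i_{b,t}}$ be the empirical average, and rejects (terminating) if $|\tilde u_{i_{b,t}}-\hat u_{i_{b,t}}|>\varepsilon_b/8$. If it never rejects, it outputs the strategy $\pi_V$ computed from $\tilde u$ as follows: sort indices $i_1,\dots,i_n$ so that $\tilde u_{i_1}\ge\dots\ge\tilde u_{i_n}$, set $\pi_{i_j}=\sigma$ for $j\le\lfloor1/\sigma\rfloor$, $\pi_{i_j}=1-\sigma\lfloor1/\sigma\rfloor$ for $j=\lfloor1/\sigma\rfloor+1$, and $\pi_{i_j}=0$ otherwise. *)

theory Defs
  imports "HOL-Probability.Probability"
begin

definition bandit :: "nat \<Rightarrow> (nat \<Rightarrow> real measure) \<Rightarrow> bool" where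
  "bandit n q \<longleftrightarrow> (\<forall>i<n. prob_space (q i) \<and> sets (q i) = sets borel \<and> measure (q i) {0..1} = 1)"

definition arm_mean :: "(nat \<Rightarrow> real measure) \<Rightarrow> nat \<Rightarrow> real" where
  "arm_mean q i = integral\<^sup>L (q i) (\<lambda>x. x)"

definition strategy :: "nat \<Rightarrow> (nat \<Rightarrow> real) \<Rightarrow> bool" where
  "strategy n \<pi> \<longleftrightarrow> (\<forall>i<n. 0 \<le> \<pi> i) \<and> (\<Sum>i<n. \<pi> i) = 1"

definition smooth_strategy :: "nat \<Rightarrow> real \<Rightarrow> (nat \<Rightarrow> real) \<Rightarrow> bool" where
  "smooth_strategy n \<sigma> \<pi> \<longleftrightarrow> strategy n \<pi> \<and> (\<forall>i<n. \<pi> i \<le> \<sigma>)"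

definition payoff :: "nat \<Rightarrow> (nat \<Rightarrow> real) \<Rightarrow> (nat \<Rightarrow> real) \<Rightarrow> real" where
  "payoff n \<pi> u = (\<Sum>i<n. \<pi> i * u i)"

definition eps_opt_smooth :: "nat \<Rightarrow> real \<Rightarrow> real \<Rightarrow> (nat \<Rightarrow> real) \<Rightarrow> (nat \<Rightarrow> real) \<Rightarrow> bool" where
  "eps_opt_smooth n \<sigma> \<epsilon> u \<pi> \<longleftrightarrow> smooth_strategy n \<sigma> \<pi> \<and>
     (\<forall>\<pi>'. smooth_strategy n \<sigma> \<pi>' \<longrightarrow> payoff n \<pi>' u - payoff n \<pi> u \<le> \<epsilon>)"

definition protoL :: "real \<Rightarrow> real" where
  "protoL \<epsilon> = log 4 (1/\<epsilon>) + 2"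

text \<open>B = {0..protoBmax \<epsilon>}\<close>
definition protoBmax :: "real \<Rightarrow> nat" where
  "protoBmax \<epsilon> = nat \<lceil>log 4 (1/\<epsilon>)\<rceil>"

definition proto_eps :: "real \<Rightarrow> nat \<Rightarrow> real" where
  "proto_eps \<epsilon> b = \<epsilon> * 4 ^ b"

definition proto_a :: "nat \<Rightarrow> real \<Rightarrow> real \<Rightarrow> nat \<Rightarrow> nat" where
  "proto_a n \<sigma> \<epsilon> b = nat \<lceil>4 ^ b * 4 * real n * \<sigma> * protoL \<epsilon> * ln 6\<rceil>"

definition proto_m :: "nat \<Rightarrow> real \<Rightarrow> real \<Rightarrow> nat \<Rightarrow> nat" where
  "proto_m n \<sigma> \<epsilon> b =
     nat \<lceil>128 * ln (12 * protoL \<epsilon> * real (proto_a n \<sigma> \<epsilon> b)) / (proto_eps \<epsilon> b)\<^sup>2\<rceil>"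

definition proto_kP :: "nat \<Rightarrow> real \<Rightarrow> nat" where
  "proto_kP n \<epsilon> = nat \<lceil>128 * ln (12 * real n / \<epsilon>) / \<epsilon>\<^sup>2\<rceil>"

text \<open>Honest prover's randomness: sample (i,k) is the k-th pull of arm i,
  for i < n and k < kP; all pulls independent.\<close>
definition prover_space :: "nat \<Rightarrow> real \<Rightarrow> (nat \<Rightarrow> real measure) \<Rightarrow> (nat \<times> nat \<Rightarrow> real) measure" where
  "prover_space n \<epsilon> q = (\<Pi>\<^sub>M p \<in> {..<n} \<times> {..<proto_kP n \<epsilon>}. q (fst p))"

definition prover_msg :: "nat \<Rightarrow> real \<Rightarrow> (nat \<times> nat \<Rightarrow> real) \<Rightarrow> nat \<Rightarrow> real" where
  "prover_msg n \<epsilon> x i = (\<Sum>k<proto_kP n \<epsilon>. x (i, k)) / real (proto_kP n \<epsilon>)"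

definition verifier_step :: "nat \<Rightarrow> (nat \<Rightarrow> real measure) \<Rightarrow> nat \<Rightarrow> (nat \<times> (nat \<Rightarrow> real)) measure" where
  "verifier_step n q m =
     uniform_count_measure {..<n} \<bind>
       (\<lambda>i. distr (\<Pi>\<^sub>M j \<in> {..<m}. q i)
                   (count_space UNIV \<Otimes>\<^sub>M (\<Pi>\<^sub>M j \<in> {..<m}. (borel :: real measure)))
                   (\<lambda>ys. (i, ys)))"

definition verifier_space :: "nat \<Rightarrow> real \<Rightarrow> real \<Rightarrow> (nat \<Rightarrow> real measure)
    \<Rightarrow> (nat \<times> nat \<Rightarrow> nat \<times> (nat \<Rightarrow> real)) measure" where
  "verifier_space n \<sigma> \<epsilon> q =
     (\<Pi>\<^sub>M p \<in> (SIGMA b:{..protoBmax \<epsilon>}. {..<proto_a n \<sigma> \<epsilon> b}).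
         verifier_step n q (proto_m n \<sigma> \<epsilon> (fst p)))"

definition protocol_space :: "nat \<Rightarrow> real \<Rightarrow> real \<Rightarrow> (nat \<Rightarrow> real measure)
    \<Rightarrow> ((nat \<times> nat \<Rightarrow> real) \<times> (nat \<times> nat \<Rightarrow> nat \<times> (nat \<Rightarrow> real))) measure" where
  "protocol_space n \<sigma> \<epsilon> q = prover_space n \<epsilon> q \<Otimes>\<^sub>M verifier_space n \<sigma> \<epsilon> q"

definition verifier_accepts :: "nat \<Rightarrow> real \<Rightarrow> real \<Rightarrow> (nat \<Rightarrow> real)
    \<Rightarrow> (nat \<times> nat \<Rightarrow> nat \<times> (nat \<Rightarrow> real)) \<Rightarrow> bool" where
  "verifier_accepts n \<sigma> \<epsilon> ut v \<longleftrightarrow>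
     (\<forall>b \<le> protoBmax \<epsilon>. \<forall>t < proto_a n \<sigma> \<epsilon> b.
        \<bar>ut (fst (v (b, t))) -
          (\<Sum>j<proto_m n \<sigma> \<epsilon> b. snd (v (b, t)) j) / real (proto_m n \<sigma> \<epsilon> b)\<bar>
        \<le> proto_eps \<epsilon> b / 8)"

text \<open>Output strategy: sort [n] by decreasing ut (stable sort, ties broken by
  smaller index), give weight sigma to the first floor(1/sigma) indices, the
  remainder 1 - sigma*floor(1/sigma) to the next one, 0 to the rest.\<close>
definition greedy_weight :: "real \<Rightarrow> nat \<Rightarrow> real" where
  "greedy_weight \<sigma> j =
     (if j < nat \<lfloor>1/\<sigma>\<rfloor> then \<sigma>
      else if j = nat \<lfloor>1/\<sigma>\<rfloor> then 1 - \<sigma> * of_int \<lfloor>1/\<sigma>\<rfloor> else 0)"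

definition verifier_output :: "nat \<Rightarrow> real \<Rightarrow> (nat \<Rightarrow> real) \<Rightarrow> nat \<Rightarrow> real" where
  "verifier_output n \<sigma> ut i =
     (let ord = sort_key (\<lambda>k. - ut k) [0..<n]
      in (\<Sum>j<n. if ord ! j = i then greedy_weight \<sigma> j else 0))"

end

theory Submission
  imports Defs
begin


lemma insort_key_cong:
  "(\<forall>y\<in>set ys. (f x \<le> f y) = (g x \<le> g y)) \<Longrightarrow> insort_key f x ys = insort_key g x ys"
  by (induction ys) auto

lemma sort_key_cong':
  "(\<forall>x\<in>set xs. \<forall>y\<in>set xs. (f x \<le> f y) = (g x \<le> g y)) \<Longrightarrow> sort_key f xs = sort_key g xs"
proof (induction xs)
  case Nil then show ?case by simp
next
  case (Cons a xs)
  then have "sort_key f xs = sort_key g xs" by simp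
  moreover have "insort_key f a (sort_key g xs) = insort_key g a (sort_key g xs)"
    using Cons.prems by (intro insort_key_cong) (simp add: set_sort)
  ultimately show ?case by simp
qed

lemma verifier_output_cong:
  assumes "\<forall>i<n. \<forall>j<n. (u i \<le> u j) = (v i \<le> v j)"
  shows "verifier_output n \<sigma> u = verifier_output n \<sigma> v"
proof -
  have "sort_key (\<lambda>k. - u k) [0..<n] = sort_key (\<lambda>k. - v k) [0..<n]"
    using assms by (intro sort_key_cong') auto
  then show ?thesis unfolding verifier_output_def by simp
qed

locale greedy_setup =
  fixes n :: nat and \<sigma> :: real
  assumes n: "n > 0" and s1: "1 / real n \<le> \<sigma>" and s2: "\<sigma> \<le> 1"
begin

definition K where "K = nat \<lfloor>1/\<sigma>\<rfloor>"

lemma sigma_pos: "\<sigma> > 0"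
  using s1 n by (smt (verit) divide_pos_pos of_nat_0_less_iff)

lemma K_real: "real K = of_int \<lfloor>1/\<sigma>\<rfloor>"
proof -
  have "1/\<sigma> \<ge> 0" using sigma_pos by simp
  then show ?thesis unfolding K_def by simp
qed

lemma K_le: "\<sigma> * real K \<le> 1"
proof -
  have "real K \<le> 1/\<sigma>" using K_real by simp
  then show ?thesis using sigma_pos by (simp add: field_simps)
qed

lemma K_gt: "1 < \<sigma> * (real K + 1)"
proof -
  have "1/\<sigma> < real K + 1" using K_real by linarith
  then show ?thesis using sigma_pos by (simp add: field_simps)
qed

lemma K_le_n: "K \<le> n"
proof -
  have "1/\<sigma> \<le> real n" using s1 sigma_pos n by (simp add: field_simps)
  then have "real K \<le> real n" using K_real by linarith
  then show ?thesis by simp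
qed

lemma K_n: "K = n \<Longrightarrow> \<sigma> * real n = 1"
  using K_le s1 n by (simp add: field_simps)

lemma gw_eq: "greedy_weight \<sigma> j = (if j < K then \<sigma> else if j = K then 1 - \<sigma> * real K else 0)"
  unfolding greedy_weight_def K_def[symmetric] K_real[symmetric] by simp

lemma gw_bounds: "0 \<le> greedy_weight \<sigma> j \<and> greedy_weight \<sigma> j \<le> \<sigma>"
  using K_le K_gt sigma_pos unfolding gw_eq by (auto simp: algebra_simps)

lemma gw_sum: "(\<Sum>j<N. greedy_weight \<sigma> j) = (if N \<le> K then real N * \<sigma> else 1)"
proof (induction N)
  case 0 then show ?case by simp
next
  case (Suc N)
  then show ?case unfolding gw_eq by (auto simp: algebra_simps)
qed

lemma gw_sum_n: "(\<Sum>j<n. greedy_weight \<sigma> j) = 1"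
  using gw_sum[of n] K_le_n K_n by (auto simp: mult.commute)

end

context
  fixes n :: nat and \<sigma> :: real and ut :: "nat \<Rightarrow> real"
  assumes gs: "greedy_setup n \<sigma>"
begin

interpretation greedy_setup n \<sigma> by (rule gs)

definition "ordr = sort_key (\<lambda>k. - ut k) [0..<n]"

lemma ordr_props: "length ordr = n" "distinct ordr" "set ordr = {..<n}"
  "sorted (map (\<lambda>k. - ut k) ordr)"
  unfolding ordr_def by (auto simp: length_sort distinct_sort set_sort sorted_sort_key)

lemma vo_at:
  assumes "j < n"
  shows "verifier_output n \<sigma> ut (ordr ! j) = greedy_weight \<sigma> j"
proof -
  have "verifier_output n \<sigma> ut (ordr ! j) = (\<Sum>j'<n. if ordr ! j' = ordr ! j then greedy_weight \<sigma> j' else 0)"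
    unfolding verifier_output_def ordr_def[symmetric] by simp
  also have "\<dots> = (\<Sum>j'<n. if j' = j then greedy_weight \<sigma> j' else 0)"
    using ordr_props assms by (intro sum.cong refl) (simp add: nth_eq_iff_index_eq)
  also have "\<dots> = greedy_weight \<sigma> j" using assms by simp
  finally show ?thesis .
qed

lemma vo_index:
  assumes "i < n"
  obtains j where "j < n" "ordr ! j = i"
  using assms ordr_props by (metis in_set_conv_nth lessThan_iff)

lemma vo_smooth: "smooth_strategy n \<sigma> (verifier_output n \<sigma> ut)"
proof -
  have b: "0 \<le> verifier_output n \<sigma> ut i \<and> verifier_output n \<sigma> ut i \<le> \<sigma>" if "i < n" for i
    using vo_index[OF that] vo_at gw_bounds by metis
  have "(\<Sum>i<n. verifier_output n \<sigma> ut i) = (\<Sum>i<n. \<Sum>j<n. if ordr ! j = i then greedy_weight \<sigma> j else 0)"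
    unfolding verifier_output_def ordr_def[symmetric] by simp
  also have "\<dots> = (\<Sum>j<n. \<Sum>i<n. if ordr ! j = i then greedy_weight \<sigma> j else 0)"
    by (rule sum.swap)
  also have "\<dots> = (\<Sum>j<n. greedy_weight \<sigma> j)"
  proof (intro sum.cong refl)
    fix j assume "j \<in> {..<n}"
    then have "ordr ! j \<in> {..<n}" using ordr_props by (metis lessThan_iff nth_mem)
    then show "(\<Sum>i<n. if ordr ! j = i then greedy_weight \<sigma> j else 0) = greedy_weight \<sigma> j"
      by (simp add: sum.delta)
  qed
  also have "\<dots> = 1" by (rule gw_sum_n)
  finally show ?thesis using b unfolding smooth_strategy_def strategy_def by auto
qed

lemma vo_opt:
  assumes "smooth_strategy n \<sigma> \<pi>'"
  shows "payoff n \<pi>' ut \<le> payoff n (verifier_output n \<sigma> ut) ut"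
proof -
  define \<pi> where "\<pi> = verifier_output n \<sigma> ut"
  define K' where "K' = min K (n - 1)"
  have K'n: "K' < n" using n unfolding K'_def by simp
  define c where "c = ut (ordr ! K')"
  have srt: "- ut (ordr ! a) \<le> - ut (ordr ! b)" if "a \<le> b" "b < n" for a b
    using sorted_nth_mono[OF ordr_props(4), of a b] that ordr_props(1) by simp
  have trm: "0 \<le> (\<pi> i - \<pi>' i) * (ut i - c)" if i: "i < n" for i
  proof -
    obtain j where j: "j < n" "ordr ! j = i" using vo_index[OF i] .
    have pij: "\<pi> i = greedy_weight \<sigma> j" using vo_at[OF j(1)] j unfolding \<pi>_def by simp
    have p': "0 \<le> \<pi>' i" "\<pi>' i \<le> \<sigma>" using assms i unfolding smooth_strategy_def strategy_def by auto
    consider "j < K'" | "j = K'" | "j > K'" by linarith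
    then show ?thesis
    proof cases
      case 1
      then have "\<pi> i = \<sigma>" using pij unfolding gw_eq K'_def by auto
      moreover have "ut i \<ge> c" using srt[of j K'] 1 K'n j unfolding c_def by simp
      ultimately show ?thesis using p' by simp
    next
      case 2 then show ?thesis using j unfolding c_def by simp
    next
      case 3
      then have "K' = K" "j > K" using j unfolding K'_def by auto
      then have "\<pi> i = 0" using pij unfolding gw_eq by auto
      moreover have "ut i \<le> c" using srt[of K' j] 3 j unfolding c_def by simp
      ultimately show ?thesis using p' by (simp add: mult_nonneg_nonpos)
    qed
  qed
  have "0 \<le> (\<Sum>i<n. (\<pi> i - \<pi>' i) * (ut i - c))"
    using trm by (intro sum_nonneg) auto
  also have "\<dots> = payoff n \<pi> ut - payoff n \<pi>' ut - c * ((\<Sum>i<n. \<pi> i) - (\<Sum>i<n. \<pi>' i))"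
    unfolding payoff_def by (simp add: algebra_simps sum_subtractf sum_distrib_left sum.distrib)
  also have "(\<Sum>i<n. \<pi> i) = 1" using vo_smooth unfolding \<pi>_def smooth_strategy_def strategy_def by simp
  also have "(\<Sum>i<n. \<pi>' i) = 1" using assms unfolding smooth_strategy_def strategy_def by simp
  finally show ?thesis unfolding \<pi>_def by simp
qed

lemma payoff_close:
  assumes "strategy n \<pi>" "\<forall>i<n. \<bar>ut i - u i\<bar> \<le> \<delta>"
  shows "\<bar>payoff n \<pi> u - payoff n \<pi> ut\<bar> \<le> \<delta>"
proof -
  have "\<bar>payoff n \<pi> u - payoff n \<pi> ut\<bar> = \<bar>\<Sum>i<n. \<pi> i * (u i - ut i)\<bar>"
    unfolding payoff_def by (simp add: algebra_simps sum_subtractf)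
  also have "\<dots> \<le> (\<Sum>i<n. \<bar>\<pi> i * (u i - ut i)\<bar>)" by (rule sum_abs)
  also have "\<dots> \<le> (\<Sum>i<n. \<pi> i * \<delta>)"
    using assms unfolding strategy_def
    by (intro sum_mono) (auto simp: abs_mult abs_minus_commute intro!: mult_left_mono)
  also have "\<dots> = \<delta>" using assms unfolding strategy_def by (simp add: sum_distrib_right[symmetric])
  finally show ?thesis .
qed

lemma vo_eps_opt:
  assumes "\<forall>i<n. \<bar>ut i - u i\<bar> \<le> \<delta>" "2 * \<delta> \<le> \<epsilon>"
  shows "eps_opt_smooth n \<sigma> \<epsilon> u (verifier_output n \<sigma> ut)"
  unfolding eps_opt_smooth_def
proof (intro conjI allI impI)
  show "smooth_strategy n \<sigma> (verifier_output n \<sigma> ut)" by (rule vo_smooth)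
  fix \<pi>' assume a: "smooth_strategy n \<sigma> \<pi>'"
  have "\<bar>payoff n \<pi>' u - payoff n \<pi>' ut\<bar> \<le> \<delta>"
    using a assms by (intro payoff_close) (auto simp: smooth_strategy_def)
  moreover have "\<bar>payoff n (verifier_output n \<sigma> ut) u - payoff n (verifier_output n \<sigma> ut) ut\<bar> \<le> \<delta>"
    using vo_smooth assms by (intro payoff_close) (auto simp: smooth_strategy_def)
  moreover have "payoff n \<pi>' ut \<le> payoff n (verifier_output n \<sigma> ut) ut" using vo_opt a .
  ultimately show "payoff n \<pi>' u - payoff n (verifier_output n \<sigma> ut) u \<le> \<epsilon>"
    using assms by linarith
qed

end



lemma hoeff_PiM:
  fixes Q :: "real measure" and J :: "'j set"
  assumes Q: "prob_space Q" "sets Q = sets borel" "measure Q {0..1} = 1"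
    and J: "finite J" "J \<noteq> {}" and t: "t \<ge> 0"
  shows "measure (PiM J (\<lambda>_. Q)) {x \<in> space (PiM J (\<lambda>_. Q)).
            t \<le> \<bar>(\<Sum>j\<in>J. x j) / real (card J) - (\<integral>y. y \<partial>Q)\<bar>}
         \<le> 2 * exp (- 2 * real (card J) * t\<^sup>2)"
proof -
  let ?M = "PiM J (\<lambda>_. Q)"
  interpret P: prob_space ?M by (rule prob_space_PiM) (use Q in auto)
  obtain j0 where j0: "j0 \<in> J" using J by auto
  have meas: "(\<lambda>x. x j) \<in> borel_measurable ?M" if "j \<in> J" for j
    using measurable_component_singleton[OF that, of "\<lambda>_. Q"] measurable_cong_sets[OF refl Q(2), of ?M]
    by simp
  have distrQ: "distr ?M borel (\<lambda>x. x j) = Q" if "j \<in> J" for j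
  proof -
    have "distr ?M borel (\<lambda>x. x j) = distr ?M Q (\<lambda>x. x j)" by (rule distr_cong) (use Q in auto)
    also have "\<dots> = Q" by (rule distr_PiM_component) (use Q that in auto)
    finally show ?thesis .
  qed
  have indep: "P.indep_vars (\<lambda>_. borel) (\<lambda>j x. x j) J"
  proof (subst P.indep_vars_iff_distr_eq_PiM')
    show "J \<noteq> {}" by fact
    show "(\<lambda>x. x j) \<in> measurable ?M borel" if "j \<in> J" for j using meas that .
    have 1: "PiM J (\<lambda>i. distr ?M borel (\<lambda>x. x i)) = ?M" by (rule PiM_cong) (auto simp: distrQ)
    have 2: "distr ?M (PiM J (\<lambda>_. borel)) (\<lambda>x. \<lambda>i\<in>J. x i) = distr ?M ?M (\<lambda>x. x)"
      by (rule distr_cong) (auto simp: Q(2) space_PiM intro!: sets_PiM_cong)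
    show "distr ?M (PiM J (\<lambda>_. borel)) (\<lambda>x. \<lambda>i\<in>J. x i) = PiM J (\<lambda>i. distr ?M borel (\<lambda>x. x i))"
      unfolding 1 2 by simp
  qed
  have AE: "AE x in ?M. x j0 \<in> {0..1}"
  proof (rule AE_PiM_component)
    show "AE x in Q. x \<in> {0..1}" using Q by (intro prob_space.AE_prob_1) auto
  qed (use Q j0 in auto)
  interpret H: Hoeffding_ineq_iid ?M J "\<lambda>j x. x j" "\<lambda>x. x j0" 0 1 "P.expectation (\<lambda>x. x j0)"
    by unfold_locales (use J indep distrQ meas j0 AE in auto)
  have E: "P.expectation (\<lambda>x. x j0) = (\<integral>y. y \<partial>Q)"
  proof -
    have "(\<integral>y. y \<partial>Q) = integral\<^sup>L (distr ?M borel (\<lambda>x. x j0)) (\<lambda>y. y)" using distrQ j0 by simp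
    also have "\<dots> = P.expectation (\<lambda>x. x j0)" by (rule integral_distr) (use meas j0 in auto)
    finally show ?thesis by simp
  qed
  show ?thesis using H.Hoeffding_ineq_abs_ge'[OF t _ J(2)] unfolding E by simp
qed



lemma comp_borel:
  assumes "j \<in> I" "sets (M j) = sets borel"
  shows "(\<lambda>x. x j) \<in> borel_measurable (PiM I M)"
  using measurable_component_singleton[OF assms(1), of M] measurable_cong_sets[OF refl assms(2), of "PiM I M"]
  by simp

lemma bandit_D: "bandit n q \<Longrightarrow> i < n \<Longrightarrow> prob_space (q i) \<and> sets (q i) = sets borel \<and> measure (q i) {0..1} = 1"
  unfolding bandit_def by auto

lemma prover_bound:
  assumes bq: "bandit n q" and i: "i < n" and kP: "proto_kP n \<epsilon> > 0" and t: "t \<ge> 0"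
  shows "measure (prover_space n \<epsilon> q) {x \<in> space (prover_space n \<epsilon> q).
           t \<le> \<bar>prover_msg n \<epsilon> x i - arm_mean q i\<bar>} \<le> 2 * exp (- 2 * real (proto_kP n \<epsilon>) * t\<^sup>2)"
proof -
  define k where "k = proto_kP n \<epsilon>"
  define K where "K = {..<n} \<times> {..<k}"
  define M where "M = (\<lambda>p::nat\<times>nat. q (fst p))"
  define I where "I = {..<k}"
  define g where "g = (\<lambda>\<omega>::nat\<times>nat\<Rightarrow>real. \<lambda>j\<in>I. \<omega> (i, j))"
  have PS: "prover_space n \<epsilon> q = PiM K M" unfolding prover_space_def K_def M_def k_def by simp
  have Qi: "prob_space (q i)" "sets (q i) = sets borel" "measure (q i) {0..1} = 1"
    using bandit_D[OF bq i] by auto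
  have probM: "prob_space (M p)" if "p \<in> K" for p using that bandit_D[OF bq] unfolding K_def M_def by auto
  have D: "distr (PiM K M) (PiM I (\<lambda>_. q i)) g = PiM I (\<lambda>_. q i)"
    using distr_PiM_reindex[of K M "\<lambda>j. (i, j)" I] probM i
    unfolding g_def M_def K_def I_def by (auto simp: inj_on_def)
  define S where "S = {y \<in> space (PiM I (\<lambda>_. q i)).
            t \<le> \<bar>(\<Sum>j\<in>I. y j) / real (card I) - (\<integral>y. y \<partial>q i)\<bar>}"
  have gm: "g \<in> measurable (PiM K M) (PiM I (\<lambda>_. q i))"
    unfolding g_def
  proof (rule measurable_restrict)
    fix j assume "j \<in> I"
    then have "(i, j) \<in> K" using i unfolding I_def K_def by auto
    then show "(\<lambda>x. x (i, j)) \<in> measurable (PiM K M) (q i)"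
      using measurable_component_singleton[of "(i,j)" K M] unfolding M_def by simp
  qed
  have hm: "(\<lambda>y. (\<Sum>j\<in>I. y j) / real (card I) - (\<integral>y. y \<partial>q i)) \<in> borel_measurable (PiM I (\<lambda>_. q i))"
    using comp_borel[of _ I "\<lambda>_. q i"] Qi by (intro borel_measurable_diff borel_measurable_divide borel_measurable_sum) auto
  have Ssets: "S \<in> sets (PiM I (\<lambda>_. q i))"
    unfolding S_def using hm by measurable
  have "measure (PiM I (\<lambda>_. q i)) S \<le> 2 * exp (- 2 * real (card I) * t\<^sup>2)"
    unfolding S_def using kP by (intro hoeff_PiM Qi t) (auto simp: I_def k_def)
  also have "measure (PiM I (\<lambda>_. q i)) S = measure (PiM K M) (g -` S \<inter> space (PiM K M))"
    by (subst D[symmetric]) (rule measure_distr[OF gm Ssets])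
  also have "g -` S \<inter> space (PiM K M) = {x \<in> space (prover_space n \<epsilon> q).
           t \<le> \<bar>prover_msg n \<epsilon> x i - arm_mean q i\<bar>}"
  proof -
    have "(\<Sum>j\<in>I. g x j) = (\<Sum>j<k. x (i, j))" for x unfolding g_def I_def by simp
    moreover have "g x \<in> space (PiM I (\<lambda>_. q i))" if "x \<in> space (PiM K M)" for x
      using measurable_space[OF gm that] .
    ultimately show ?thesis unfolding S_def PS prover_msg_def arm_mean_def k_def[symmetric] I_def
      by auto
  qed
  finally show ?thesis unfolding I_def k_def PS by simp
qed



context
  fixes n :: nat and q :: "nat \<Rightarrow> real measure" and m :: nat
  assumes bq: "bandit n q" and n: "n > 0"
begin

abbreviation "NN \<equiv> (count_space UNIV \<Otimes>\<^sub>M (\<Pi>\<^sub>M j \<in> {..<m}. (borel :: real measure)))"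
abbreviation "KK \<equiv> (\<lambda>i. distr (\<Pi>\<^sub>M j \<in> {..<m}. q i) NN (\<lambda>ys. (i, ys)))"
abbreviation "UU \<equiv> uniform_count_measure {..<n}"

lemma vs_eq: "verifier_step n q m = UU \<bind> KK"
  unfolding verifier_step_def by simp

lemma pair_meas:
  assumes i: "i < n"
  shows "(\<lambda>ys. (i, ys)) \<in> measurable (\<Pi>\<^sub>M j \<in> {..<m}. q i) NN"
proof (rule measurable_Pair)
  show "(\<lambda>ys. i) \<in> measurable (\<Pi>\<^sub>M j \<in> {..<m}. q i) (count_space UNIV)" by simp
  have "sets (\<Pi>\<^sub>M j \<in> {..<m}. q i) = sets (\<Pi>\<^sub>M j \<in> {..<m}. (borel :: real measure))"
    using bandit_D[OF bq i] by (intro sets_PiM_cong) auto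
  then show "(\<lambda>ys. ys) \<in> measurable (\<Pi>\<^sub>M j \<in> {..<m}. q i) (\<Pi>\<^sub>M j \<in> {..<m}. (borel :: real measure))"
    by (rule measurable_ident_sets)
qed

lemma KK_prob: "i < n \<Longrightarrow> KK i \<in> space (prob_algebra NN)"
  unfolding space_prob_algebra
  using bandit_D[OF bq] pair_meas
  by (auto intro!: prob_space.prob_space_distr prob_space_PiM)

lemma UU_prob: "UU \<in> space (prob_algebra UU)"
  unfolding space_prob_algebra using n by (auto intro!: prob_space_uniform_count_measure)

lemma KK_meas: "KK \<in> UU \<rightarrow>\<^sub>M prob_algebra NN"
proof -
  have "sets UU = sets (count_space {..<n})" by (simp add: sets_uniform_count_measure)
  then have "measurable UU (prob_algebra NN) = measurable (count_space {..<n}) (prob_algebra NN)"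
    by (intro measurable_cong_sets) auto
  then show ?thesis using KK_prob by auto
qed

lemma vs_prob: "prob_space (verifier_step n q m)"
  unfolding vs_eq by (rule prob_space_bind'[OF UU_prob KK_meas])

lemma vs_sets: "sets (verifier_step n q m) = sets NN"
  unfolding vs_eq by (rule sets_bind'[OF UU_prob KK_meas])

lemma vs_space: "space (verifier_step n q m) = space NN"
  using vs_sets by (rule sets_eq_imp_space_eq)

definition "badz t = {z \<in> space NN. n \<le> fst z \<or> t \<le> \<bar>(\<Sum>j<m. snd z j) / real m - arm_mean q (fst z)\<bar>}"

lemma badz_iff: "z \<in> badz t \<longleftrightarrow> z \<in> space NN \<and> (n \<le> fst z \<or> t \<le> \<bar>(\<Sum>j<m. snd z j) / real m - arm_mean q (fst z)\<bar>)"
  unfolding badz_def by blast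

lemma badz_sets: "badz t \<in> sets NN"
proof -
  have h1: "(\<lambda>z. arm_mean q (fst z)) \<in> borel_measurable NN"
    by (rule measurable_compose[OF measurable_fst]) simp
  have h2: "(\<lambda>z. snd z j) \<in> borel_measurable NN" if "j < m" for j
    by (rule measurable_compose[OF measurable_snd measurable_component_singleton]) (use that in auto)
  have hm: "(\<lambda>z. (\<Sum>j<m. snd z j) / real m - arm_mean q (fst z)) \<in> borel_measurable NN"
    using h1 h2 by (intro borel_measurable_diff borel_measurable_divide borel_measurable_sum) auto
  have h3: "(\<lambda>z. fst z) \<in> measurable NN (count_space UNIV)" by (rule measurable_fst)
  show ?thesis unfolding badz_def using hm h3 by measurable
qed

lemma vs_bound:
  assumes m: "m > 0" and t: "t \<ge> 0"
  shows "measure (verifier_step n q m) (badz t) \<le> 2 * exp (- 2 * real m * t\<^sup>2)"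
proof -
  define B where "B = 2 * exp (- 2 * real m * t\<^sup>2)"
  have "emeasure (verifier_step n q m) (badz t) = (\<integral>\<^sup>+i. emeasure (KK i) (badz t) \<partial>UU)"
    unfolding vs_eq by (rule emeasure_bind_prob_algebra[OF UU_prob KK_meas badz_sets])
  also have "\<dots> \<le> (\<integral>\<^sup>+i. ennreal B \<partial>UU)"
  proof (rule nn_integral_mono)
    fix i assume "i \<in> space UU"
    then have i: "i < n" by (simp add: space_uniform_count_measure)
    note Qi = bandit_D[OF bq i]
    have "emeasure (KK i) (badz t) = emeasure (\<Pi>\<^sub>M j \<in> {..<m}. q i)
            ((\<lambda>ys. (i, ys)) -` badz t \<inter> space (\<Pi>\<^sub>M j \<in> {..<m}. q i))"
      by (rule emeasure_distr[OF pair_meas[OF i] badz_sets])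
    also have "(\<lambda>ys. (i, ys)) -` badz t \<inter> space (\<Pi>\<^sub>M j \<in> {..<m}. q i) =
       {x \<in> space (\<Pi>\<^sub>M j \<in> {..<m}. q i). t \<le> \<bar>(\<Sum>j\<in>{..<m}. x j) / real (card {..<m}) - (\<integral>y. y \<partial>q i)\<bar>}"
      using i measurable_space[OF pair_meas[OF i]] unfolding badz_def arm_mean_def by auto
    also have "emeasure (\<Pi>\<^sub>M j \<in> {..<m}. q i) \<dots> = ennreal (measure (\<Pi>\<^sub>M j \<in> {..<m}. q i) \<dots>)"
      using Qi by (intro finite_measure.emeasure_eq_measure prob_space.finite_measure prob_space_PiM) auto
    also have "\<dots> \<le> ennreal B"
      unfolding B_def using hoeff_PiM[of "q i" "{..<m}" t] Qi m t by (intro ennreal_leI) auto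
    finally show "emeasure (KK i) (badz t) \<le> ennreal B" .
  qed
  also have "\<dots> = ennreal B"
  proof -
    have "{..<n} \<noteq> {}" using n by auto
    then have "emeasure UU (space UU) = 1"
      using prob_space.emeasure_space_1[OF prob_space_uniform_count_measure[of "{..<n}"]] by auto
    then show ?thesis by simp
  qed
  finally have "emeasure (verifier_step n q m) (badz t) \<le> ennreal B" .
  then show ?thesis unfolding B_def
    using vs_prob by (simp add: finite_measure.emeasure_eq_measure prob_space.finite_measure)
qed

lemma vs_fst: "(\<lambda>z. fst z) \<in> measurable (verifier_step n q m) (count_space UNIV)"
  by (subst measurable_cong_sets[OF vs_sets refl]) (rule measurable_fst)

lemma vs_snd: "j < m \<Longrightarrow> (\<lambda>z. snd z j) \<in> borel_measurable (verifier_step n q m)"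
proof -
  assume "j < m"
  then have "(\<lambda>z. snd z j) \<in> borel_measurable NN"
    by (intro measurable_compose[OF measurable_snd measurable_component_singleton]) auto
  then show ?thesis by (subst measurable_cong_sets[OF vs_sets refl])
qed

end



lemma pred_order_inv:
  fixes g :: "'a \<Rightarrow> nat \<Rightarrow> real" and F :: "(nat \<Rightarrow> real) \<Rightarrow> bool"
  assumes inv: "\<And>u v. \<forall>i<n. \<forall>j<n. (u i \<le> u j) = (v i \<le> v j) \<Longrightarrow> F u = F v"
    and meas: "\<And>i. i < n \<Longrightarrow> (\<lambda>x. g x i) \<in> borel_measurable M"
  shows "{x \<in> space M. F (g x)} \<in> sets M"
proof -
  define B where "B = {..<n} \<times> {..<n}"
  define R where "R = (\<lambda>u::nat\<Rightarrow>real. \<lambda>p\<in>B. u (fst p) \<le> u (snd p))"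
  define A where "A = {a \<in> PiE B (\<lambda>_. UNIV). \<exists>u. R u = a \<and> F u}"
  have finB: "finite B" unfolding B_def by simp
  have finA: "finite A"
    by (rule finite_subset[of _ "PiE B (\<lambda>_. UNIV)"]) (auto simp: A_def finB intro!: finite_PiE)
  have eq: "{x \<in> space M. F (g x)} = (\<Union>a\<in>A. {x \<in> space M. \<forall>p\<in>B. (g x (fst p) \<le> g x (snd p)) = a p})"
  proof (intro equalityI subsetI)
    fix x assume x: "x \<in> {x \<in> space M. F (g x)}"
    have "R (g x) \<in> A" unfolding A_def R_def using x by auto
    moreover have "\<forall>p\<in>B. (g x (fst p) \<le> g x (snd p)) = R (g x) p" unfolding R_def by simp
    ultimately show "x \<in> (\<Union>a\<in>A. {x \<in> space M. \<forall>p\<in>B. (g x (fst p) \<le> g x (snd p)) = a p})"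
      using x by blast
  next
    fix x assume "x \<in> (\<Union>a\<in>A. {x \<in> space M. \<forall>p\<in>B. (g x (fst p) \<le> g x (snd p)) = a p})"
    then obtain a u where a: "x \<in> space M" "\<forall>p\<in>B. (g x (fst p) \<le> g x (snd p)) = a p"
      and u: "R u = a" "F u" unfolding A_def by blast
    have "\<forall>i<n. \<forall>j<n. (g x i \<le> g x j) = (u i \<le> u j)"
    proof (intro allI impI)
      fix i j assume "i < n" "j < n"
      then have p: "(i, j) \<in> B" unfolding B_def by simp
      have "(g x i \<le> g x j) = a (i, j)" using bspec[OF a(2) p] by simp
      also have "a (i, j) = R u (i, j)" using u(1) by simp
      also have "\<dots> = (u i \<le> u j)" using p unfolding R_def by simp
      finally show "(g x i \<le> g x j) = (u i \<le> u j)" .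
    qed
    then have "F (g x) = F u" by (rule inv)
    then show "x \<in> {x \<in> space M. F (g x)}" using u a by simp
  qed
  have S: "{x \<in> space M. \<forall>p\<in>B. (g x (fst p) \<le> g x (snd p)) = a p} \<in> sets M" for a
  proof (rule sets.sets_Collect_finite_All[OF _ finB])
    fix p assume "p \<in> B"
    then have [measurable]: "(\<lambda>x. g x (fst p)) \<in> borel_measurable M" "(\<lambda>x. g x (snd p)) \<in> borel_measurable M"
      using meas unfolding B_def by auto
    show "{x \<in> space M. (g x (fst p) \<le> g x (snd p)) = a p} \<in> sets M" by measurable
  qed
  show ?thesis unfolding eq by (rule sets.finite_UN[OF finA S])
qed



lemma msg_meas:
  assumes bq: "bandit n q"
  shows "(\<lambda>x. prover_msg n \<epsilon> x i) \<in> borel_measurable (prover_space n \<epsilon> q)"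
proof -
  have c: "(\<lambda>x. x (i, k)) \<in> borel_measurable (prover_space n \<epsilon> q)" for k
  proof (cases "(i, k) \<in> {..<n} \<times> {..<proto_kP n \<epsilon>}")
    case True
    then have "i < n" by simp
    then have "sets (q i) = sets borel" using bandit_D[OF bq] by blast
    then show ?thesis unfolding prover_space_def
      by (intro comp_borel[OF True]) simp
  next
    case False
    have eq: "x (i, k) = undefined" if "x \<in> space (prover_space n \<epsilon> q)" for x
      using that unfolding prover_space_def space_PiM by (rule PiE_arb[OF _ False])
    show ?thesis by (subst measurable_cong[OF eq]) auto
  qed
  show ?thesis unfolding prover_msg_def
    using c by (intro borel_measurable_divide borel_measurable_sum) auto
qed

lemma ceil_ge: "x \<le> real (nat \<lceil>x\<rceil>)"
  by (rule real_nat_ceiling_ge)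

lemma exp_bound:
  fixes k :: nat and e X :: real
  assumes e: "e > 0" and X: "X > 0" and k: "real k \<ge> 128 * ln X / e\<^sup>2"
  shows "2 * exp (- 2 * real k * (e / 16)\<^sup>2) \<le> 2 / X"
proof -
  have "128 * ln X \<le> real k * e\<^sup>2" using k e by (simp add: field_simps)
  then have "- 2 * real k * (e / 16)\<^sup>2 \<le> - ln X" by (simp add: power2_eq_square field_simps)
  then have "exp (- 2 * real k * (e / 16)\<^sup>2) \<le> exp (- ln X)" by simp
  also have "exp (- ln X) = 1 / X" using X by (simp add: exp_minus inverse_eq_divide)
  finally show ?thesis by simp
qed

theorem mainTheorem3:
  fixes n :: nat and \<sigma> \<epsilon> :: real and q :: "nat \<Rightarrow> real measure"
  assumes "n > 0"
    and "1 / real n \<le> \<sigma>" and "\<sigma> \<le> 1"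
    and "0 < \<epsilon>" and "\<epsilon> < 1"
    and "bandit n q"
  shows "measure (protocol_space n \<sigma> \<epsilon> q)
           {\<omega> \<in> space (protocol_space n \<sigma> \<epsilon> q).
              verifier_accepts n \<sigma> \<epsilon> (prover_msg n \<epsilon> (fst \<omega>)) (snd \<omega>) \<and>
              eps_opt_smooth n \<sigma> \<epsilon> (arm_mean q)
                (verifier_output n \<sigma> (prover_msg n \<epsilon> (fst \<omega>)))}
         \<ge> 2 / 3"
proof -
  note npos = assms(1) and s1 = assms(2) and s2 = assms(3) and e0 = assms(4) and e1 = assms(5)
    and bq = assms(6)
  have gs: "greedy_setup n \<sigma>" unfolding greedy_setup_def using npos s1 s2 by auto
  have sig: "\<sigma> > 0" using greedy_setup.sigma_pos[OF gs] .
  define k where "k = proto_kP n \<epsilon>"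
  define L where "L = protoL \<epsilon>"
  define Bm where "Bm = protoBmax \<epsilon>"
  define a where "a = proto_a n \<sigma> \<epsilon>"
  define Idx where "Idx = (SIGMA b:{..Bm}. {..<a b})"
  define mm where "mm = proto_m n \<sigma> \<epsilon>"
  define eb where "eb = proto_eps \<epsilon>"
  define u where "u = arm_mean q"
  define PS where "PS = prover_space n \<epsilon> q"
  define Vm where "Vm = (\<lambda>p::nat\<times>nat. verifier_step n q (mm (fst p)))"
  define VS where "VS = PiM Idx Vm"
  have VSdef: "verifier_space n \<sigma> \<epsilon> q = VS"
    unfolding verifier_space_def VS_def Vm_def Idx_def Bm_def mm_def a_def by simp
  have PMdef: "protocol_space n \<sigma> \<epsilon> q = PS \<Otimes>\<^sub>M VS"
    unfolding protocol_space_def VSdef PS_def ..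
  have finIdx: "finite Idx" unfolding Idx_def by auto

  have lg: "log 4 (1/\<epsilon>) > 0" using e0 e1 by simp
  have L2: "L > 2" unfolding L_def protoL_def using lg by simp
  have BmL: "real Bm + 1 \<le> L"
  proof -
    have "real Bm = of_int \<lceil>log 4 (1/\<epsilon>)\<rceil>" unfolding Bm_def protoBmax_def using lg by simp
    then have "real Bm < log 4 (1/\<epsilon>) + 1" by linarith
    then show ?thesis unfolding L_def protoL_def by simp
  qed
  have X1: "12 * real n / \<epsilon> > 1"
  proof -
    have "12 * real n \<ge> 12" using npos by simp
    then have "12 * real n > \<epsilon>" using e1 by simp
    then show ?thesis using e0 by simp
  qed
  have kge: "real k \<ge> 128 * ln (12 * real n / \<epsilon>) / \<epsilon>\<^sup>2"
    unfolding k_def proto_kP_def by (rule ceil_ge)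
  have kpos: "k > 0"
  proof -
    have "ln (12 * real n / \<epsilon>) > 0" using X1 by simp
    then have "128 * ln (12 * real n / \<epsilon>) / \<epsilon>\<^sup>2 > 0" using e0 by simp
    then show ?thesis using kge by linarith
  qed
  have kbound: "2 * exp (- 2 * real k * (\<epsilon> / 16)\<^sup>2) \<le> \<epsilon> / (6 * real n)"
  proof -
    have "2 * exp (- 2 * real k * (\<epsilon> / 16)\<^sup>2) \<le> 2 / (12 * real n / \<epsilon>)"
      using exp_bound[OF e0 _ kge] X1 by simp
    also have "\<dots> = \<epsilon> / (6 * real n)" using npos e0 by (simp add: field_simps)
    finally show ?thesis .
  qed
  have ebpos: "eb b > 0" for b unfolding eb_def proto_eps_def using e0 by simp
  have ebge: "eb b \<ge> \<epsilon>" for b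
  proof -
    have "(1::real) \<le> 4 ^ b" by simp
    then show ?thesis unfolding eb_def proto_eps_def using e0 by (simp add: mult_le_cancel_left1)
  qed
  have apos: "a b > 0" for b
  proof -
    have "real n * \<sigma> \<ge> 1" using s1 npos by (simp add: field_simps)
    have "4 ^ b * 4 * real n * \<sigma> * L * ln 6 > 0" using L2 sig npos by (intro mult_pos_pos) auto
    then show ?thesis unfolding a_def proto_a_def L_def[symmetric] by simp
  qed
  have mge: "real (mm b) \<ge> 128 * ln (12 * L * real (a b)) / (eb b)\<^sup>2" for b
    unfolding mm_def proto_m_def L_def[symmetric] a_def[symmetric] eb_def[symmetric] by (rule ceil_ge)
  have XB: "12 * L * real (a b) > 1" for b
  proof -
    have "real (a b) \<ge> 1" using apos[of b] by simp
    then have "L * real (a b) \<ge> L * 1" using L2 by (intro mult_left_mono) auto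
    then show ?thesis using L2 by linarith
  qed
  have mpos: "mm b > 0" for b
  proof -
    have "ln (12 * L * real (a b)) > 0" using XB[of b] by simp
    then have "128 * ln (12 * L * real (a b)) / (eb b)\<^sup>2 > 0" using ebpos[of b] by simp
    then show ?thesis using mge[of b] by linarith
  qed
  have mbound: "2 * exp (- 2 * real (mm b) * (eb b / 16)\<^sup>2) \<le> 1 / (6 * L * real (a b))" for b
  proof -
    have "2 * exp (- 2 * real (mm b) * (eb b / 16)\<^sup>2) \<le> 2 / (12 * L * real (a b))"
      using exp_bound[OF ebpos _ mge] XB[of b] by simp
    also have "\<dots> = 1 / (6 * L * real (a b))" by simp
    finally show ?thesis .
  qed

  have PSp: "prob_space PS" unfolding PS_def prover_space_def
    using bandit_D[OF bq] by (intro prob_space_PiM) auto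
  have PSf: "finite_measure PS" using PSp by (rule prob_space.finite_measure)
  define badP where "badP i = {x \<in> space PS. \<epsilon>/16 \<le> \<bar>prover_msg n \<epsilon> x i - u i\<bar>}" for i
  have badP_sets: "badP i \<in> sets PS" for i
  proof -
    have [measurable]: "(\<lambda>x. prover_msg n \<epsilon> x i) \<in> borel_measurable PS"
      unfolding PS_def by (rule msg_meas[OF bq])
    show ?thesis unfolding badP_def by measurable
  qed
  define GP where "GP = space PS - (\<Union>i<n. badP i)"
  have UP: "(\<Union>i<n. badP i) \<in> sets PS" using badP_sets by (intro sets.finite_UN) auto
  have GP_sets: "GP \<in> sets PS" unfolding GP_def using UP by (intro sets.Diff sets.top)
  have "measure PS (\<Union>i<n. badP i) \<le> (\<Sum>i<n. measure PS (badP i))"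
    using badP_sets by (intro finite_measure.finite_measure_subadditive_finite[OF PSf]) auto
  also have "\<dots> \<le> (\<Sum>i<n. \<epsilon> / (6 * real n))"
  proof (intro sum_mono)
    fix i assume "i \<in> {..<n}"
    then have "measure PS (badP i) \<le> 2 * exp (- 2 * real k * (\<epsilon> / 16)\<^sup>2)"
      unfolding badP_def PS_def u_def k_def using e0 kpos k_def
      by (intro prover_bound[OF bq]) auto
    then show "measure PS (badP i) \<le> \<epsilon> / (6 * real n)" using kbound by linarith
  qed
  also have "\<dots> = \<epsilon> / 6" using npos by simp
  finally have "measure PS (\<Union>i<n. badP i) \<le> \<epsilon> / 6" .
  then have GPm: "measure PS GP \<ge> 5/6"
    unfolding GP_def using prob_space.prob_compl[OF PSp UP] e1 by linarith

  have Vm_prob: "prob_space (Vm p)" for p unfolding Vm_def by (rule vs_prob[OF bq npos])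
  have VSp: "prob_space VS" unfolding VS_def by (rule prob_space_PiM[OF Vm_prob])
  have VSf: "finite_measure VS" using VSp by (rule prob_space.finite_measure)
  define bz where "bz (p::nat\<times>nat) = badz n q (mm (fst p)) (eb (fst p) / 16)" for p
  have bz_sets: "bz p \<in> sets (Vm p)" for p
  proof -
    have "sets (Vm p) = sets (count_space UNIV \<Otimes>\<^sub>M (\<Pi>\<^sub>M j \<in> {..<mm (fst p)}. (borel :: real measure)))"
      unfolding Vm_def by (rule vs_sets[OF bq npos])
    moreover have "bz p \<in> sets (count_space UNIV \<Otimes>\<^sub>M (\<Pi>\<^sub>M j \<in> {..<mm (fst p)}. (borel :: real measure)))"
      unfolding bz_def by (rule badz_sets[OF bq npos])
    ultimately show ?thesis by simp
  qed
  define badV where "badV p = {v \<in> space VS. v p \<in> bz p}" for p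
  have badV_eq: "badV p = (\<lambda>v. v p) -` bz p \<inter> space VS" for p unfolding badV_def by auto
  have badV_sets: "badV p \<in> sets VS" if "p \<in> Idx" for p
    unfolding badV_eq VS_def
    by (rule measurable_sets[OF measurable_component_singleton[OF that] bz_sets])
  have badV_m: "measure VS (badV p) \<le> 1 / (6 * L * real (a (fst p)))" if p: "p \<in> Idx" for p
  proof -
    have "measure VS (badV p) = measure (distr VS (Vm p) (\<lambda>v. v p)) (bz p)"
      unfolding badV_eq VS_def
      by (rule measure_distr[symmetric, OF measurable_component_singleton[OF p] bz_sets])
    also have "distr VS (Vm p) (\<lambda>v. v p) = Vm p"
      unfolding VS_def using Vm_prob p by (intro distr_PiM_component) auto
    also have "measure (Vm p) (bz p) \<le> 2 * exp (- 2 * real (mm (fst p)) * (eb (fst p) / 16)\<^sup>2)"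
      unfolding Vm_def bz_def using mpos ebpos
      by (intro vs_bound[OF bq npos]) (auto intro: less_imp_le)
    also have "\<dots> \<le> 1 / (6 * L * real (a (fst p)))" by (rule mbound)
    finally show ?thesis .
  qed
  define GV where "GV = space VS - (\<Union>p\<in>Idx. badV p)"
  have UV: "(\<Union>p\<in>Idx. badV p) \<in> sets VS" using badV_sets finIdx by (intro sets.finite_UN) auto
  have GV_sets: "GV \<in> sets VS" unfolding GV_def using UV by (intro sets.Diff sets.top)
  have "measure VS (\<Union>p\<in>Idx. badV p) \<le> (\<Sum>p\<in>Idx. measure VS (badV p))"
    using badV_sets finIdx by (intro finite_measure.finite_measure_subadditive_finite[OF VSf]) auto
  also have "\<dots> \<le> (\<Sum>p\<in>Idx. 1 / (6 * L * real (a (fst p))))"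
    using badV_m by (intro sum_mono) auto
  also have "\<dots> = (\<Sum>b\<in>{..Bm}. \<Sum>t\<in>{..<a b}. 1 / (6 * L * real (a b)))"
    unfolding Idx_def by (subst sum.Sigma) (auto intro!: sum.cong simp: split_beta)
  also have "\<dots> = (\<Sum>b\<in>{..Bm}. 1 / (6 * L))"
  proof (intro sum.cong refl)
    fix b
    show "(\<Sum>t\<in>{..<a b}. 1 / (6 * L * real (a b))) = 1 / (6 * L)"
      using apos[of b] L2 by (simp add: field_simps)
  qed
  also have "\<dots> = (real Bm + 1) / (6 * L)" by simp
  also have "\<dots> \<le> 1 / 6" using BmL L2 by (simp add: field_simps)
  finally have "measure VS (\<Union>p\<in>Idx. badV p) \<le> 1 / 6" .
  then have GVm: "measure VS GV \<ge> 5/6"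
    unfolding GV_def using prob_space.prob_compl[OF VSp UV] by linarith

  have PVf: "finite_measure (PS \<Otimes>\<^sub>M VS)" using prob_space_pair[OF PSp VSp] by (rule prob_space.finite_measure)
  have rect: "measure (PS \<Otimes>\<^sub>M VS) (GP \<times> GV) = measure PS GP * measure VS GV"
  proof -
    have "emeasure (PS \<Otimes>\<^sub>M VS) (GP \<times> GV) = emeasure PS GP * emeasure VS GV"
      using sigma_finite_measure.emeasure_pair_measure_Times[OF prob_space_imp_sigma_finite[OF VSp] GP_sets GV_sets] by simp
    then have "ennreal (measure (PS \<Otimes>\<^sub>M VS) (GP \<times> GV)) = ennreal (measure PS GP * measure VS GV)"
      by (simp add: finite_measure.emeasure_eq_measure[OF PSf] finite_measure.emeasure_eq_measure[OF VSf] finite_measure.emeasure_eq_measure[OF PVf] ennreal_mult measure_nonneg)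
    moreover have "0 \<le> measure PS GP * measure VS GV" by (simp add: measure_nonneg)
    ultimately show ?thesis by (simp add: measure_nonneg)
  qed
  have rect_ge: "measure (PS \<Otimes>\<^sub>M VS) (GP \<times> GV) \<ge> 2/3"
  proof -
    have "(5/6) * (5/6) \<le> measure PS GP * measure VS GV"
      using GPm GVm by (intro mult_mono) auto
    then show ?thesis unfolding rect by simp
  qed

  define T where "T = {\<omega> \<in> space (PS \<Otimes>\<^sub>M VS).
              verifier_accepts n \<sigma> \<epsilon> (prover_msg n \<epsilon> (fst \<omega>)) (snd \<omega>) \<and>
              eps_opt_smooth n \<sigma> \<epsilon> (arm_mean q)
                (verifier_output n \<sigma> (prover_msg n \<epsilon> (fst \<omega>)))}"
  have accept_eq: "verifier_accepts n \<sigma> \<epsilon> ut v \<longleftrightarrow>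
     (\<forall>p\<in>Idx. \<bar>ut (fst (v p)) - (\<Sum>j<mm (fst p). snd (v p) j) / real (mm (fst p))\<bar> \<le> eb (fst p) / 8)"
    for ut v
    unfolding verifier_accepts_def Idx_def mm_def eb_def Bm_def a_def by auto
  have msgm: "(\<lambda>\<omega>. prover_msg n \<epsilon> (fst \<omega>) i) \<in> borel_measurable (PS \<Otimes>\<^sub>M VS)" for i
    by (rule measurable_compose[OF measurable_fst]) (unfold PS_def, rule msg_meas[OF bq])
  have A_sets: "{\<omega> \<in> space (PS \<Otimes>\<^sub>M VS). verifier_accepts n \<sigma> \<epsilon> (prover_msg n \<epsilon> (fst \<omega>)) (snd \<omega>)}
      \<in> sets (PS \<Otimes>\<^sub>M VS)"
    unfolding accept_eq
  proof (rule sets.sets_Collect_finite_All[OF _ finIdx])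
    fix p assume p: "p \<in> Idx"
    have c1: "(\<lambda>\<omega>. snd \<omega> p) \<in> measurable (PS \<Otimes>\<^sub>M VS) (Vm p)"
      unfolding VS_def by (rule measurable_compose[OF measurable_snd measurable_component_singleton[OF p]])
    have c2: "(\<lambda>\<omega>. fst (snd \<omega> p)) \<in> measurable (PS \<Otimes>\<^sub>M VS) (count_space UNIV)"
      by (rule measurable_compose[OF c1]) (unfold Vm_def, rule vs_fst[OF bq npos])
    have c3: "(\<lambda>\<omega>. snd (snd \<omega> p) j) \<in> borel_measurable (PS \<Otimes>\<^sub>M VS)" if "j < mm (fst p)" for j
      by (rule measurable_compose[OF c1]) (unfold Vm_def, rule vs_snd[OF bq npos that])
    have c4: "(\<lambda>\<omega>. prover_msg n \<epsilon> (fst \<omega>) (fst (snd \<omega> p))) \<in> borel_measurable (PS \<Otimes>\<^sub>M VS)"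
      by (rule measurable_compose_countable'[where f="\<lambda>i \<omega>. prover_msg n \<epsilon> (fst \<omega>) i", OF msgm c2]) auto
    have [measurable]: "(\<lambda>\<omega>. prover_msg n \<epsilon> (fst \<omega>) (fst (snd \<omega> p)) -
        (\<Sum>j<mm (fst p). snd (snd \<omega> p) j) / real (mm (fst p))) \<in> borel_measurable (PS \<Otimes>\<^sub>M VS)"
      using c3 c4 by (intro borel_measurable_diff borel_measurable_divide borel_measurable_sum) auto
    show "{\<omega> \<in> space (PS \<Otimes>\<^sub>M VS). \<bar>prover_msg n \<epsilon> (fst \<omega>) (fst (snd \<omega> p)) -
        (\<Sum>j<mm (fst p). snd (snd \<omega> p) j) / real (mm (fst p))\<bar> \<le> eb (fst p) / 8} \<in> sets (PS \<Otimes>\<^sub>M VS)"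
      by measurable
  qed
  have E_sets: "{\<omega> \<in> space (PS \<Otimes>\<^sub>M VS). eps_opt_smooth n \<sigma> \<epsilon> (arm_mean q)
                (verifier_output n \<sigma> (prover_msg n \<epsilon> (fst \<omega>)))} \<in> sets (PS \<Otimes>\<^sub>M VS)"
  proof (rule pred_order_inv[where g="\<lambda>\<omega>. prover_msg n \<epsilon> (fst \<omega>)" and n=n])
    fix u v :: "nat \<Rightarrow> real" assume "\<forall>i<n. \<forall>j<n. (u i \<le> u j) = (v i \<le> v j)"
    then have "verifier_output n \<sigma> u = verifier_output n \<sigma> v" by (rule verifier_output_cong)
    then show "eps_opt_smooth n \<sigma> \<epsilon> (arm_mean q) (verifier_output n \<sigma> u) =
               eps_opt_smooth n \<sigma> \<epsilon> (arm_mean q) (verifier_output n \<sigma> v)" by simp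
  next
    fix i show "(\<lambda>\<omega>. prover_msg n \<epsilon> (fst \<omega>) i) \<in> borel_measurable (PS \<Otimes>\<^sub>M VS)" by (rule msgm)
  qed
  have T_sets: "T \<in> sets (PS \<Otimes>\<^sub>M VS)"
  proof -
    have "T = {\<omega> \<in> space (PS \<Otimes>\<^sub>M VS). verifier_accepts n \<sigma> \<epsilon> (prover_msg n \<epsilon> (fst \<omega>)) (snd \<omega>)} \<inter>
              {\<omega> \<in> space (PS \<Otimes>\<^sub>M VS). eps_opt_smooth n \<sigma> \<epsilon> (arm_mean q)
                (verifier_output n \<sigma> (prover_msg n \<epsilon> (fst \<omega>)))}"
      unfolding T_def by auto
    then show ?thesis using A_sets E_sets by auto
  qed
  have sub: "GP \<times> GV \<subseteq> T"
  proof (rule subsetI)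
    fix \<omega> assume "\<omega> \<in> GP \<times> GV"
    then obtain x v where \<omega>: "\<omega> = (x, v)" and x: "x \<in> GP" and v: "v \<in> GV" by auto
    have xs: "x \<in> space PS" and vs: "v \<in> space VS" using x v unfolding GP_def GV_def by auto
    have close: "\<bar>prover_msg n \<epsilon> x i - u i\<bar> < \<epsilon> / 16" if "i < n" for i
    proof -
      have "x \<notin> badP i" using x that unfolding GP_def by auto
      then have "\<not> \<epsilon>/16 \<le> \<bar>prover_msg n \<epsilon> x i - u i\<bar>" using xs unfolding badP_def by blast
      then show ?thesis by linarith
    qed
    have acc: "verifier_accepts n \<sigma> \<epsilon> (prover_msg n \<epsilon> x) v"
      unfolding accept_eq
    proof
      fix p assume p: "p \<in> Idx"
      have "v p \<in> space (Vm p)" using vs p unfolding VS_def by (auto simp: space_PiM)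
      then have vp: "v p \<in> space (count_space UNIV \<Otimes>\<^sub>M (\<Pi>\<^sub>M j \<in> {..<mm (fst p)}. (borel :: real measure)))"
        unfolding Vm_def vs_space[OF bq npos] .
      have "v p \<notin> bz p" using v p unfolding GV_def badV_def by auto
      then have i: "fst (v p) < n" and
        d: "\<bar>(\<Sum>j<mm (fst p). snd (v p) j) / real (mm (fst p)) - u (fst (v p))\<bar> < eb (fst p) / 16"
        using vp unfolding bz_def badz_iff[OF bq npos] u_def by auto
      have "\<bar>prover_msg n \<epsilon> x (fst (v p)) - u (fst (v p))\<bar> < \<epsilon> / 16" using close[OF i] .
      then show "\<bar>prover_msg n \<epsilon> x (fst (v p)) - (\<Sum>j<mm (fst p). snd (v p) j) / real (mm (fst p))\<bar>
                 \<le> eb (fst p) / 8"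
        using d ebge[of "fst p"] by linarith
    qed
    have opt: "eps_opt_smooth n \<sigma> \<epsilon> (arm_mean q) (verifier_output n \<sigma> (prover_msg n \<epsilon> x))"
      using vo_eps_opt[OF gs, of "prover_msg n \<epsilon> x" "arm_mean q" "\<epsilon> / 16" \<epsilon>] close e0
      unfolding u_def by fastforce
    show "\<omega> \<in> T" unfolding T_def \<omega> using acc opt xs vs by (simp add: space_pair_measure)
  qed
  have "measure (PS \<Otimes>\<^sub>M VS) (GP \<times> GV) \<le> measure (PS \<Otimes>\<^sub>M VS) T"
    by (rule finite_measure.finite_measure_mono[OF PVf sub T_sets])
  then show ?thesis using rect_ge unfolding PMdef T_def by simp
qed


end
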